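(* Let $k\ge4$ be even and let $(s_1,t_1\mid s_2,t_2\mid s_3,t_3)$ be a triple overlap in $\mathbb{C}$ with all $s_m,t_m\in\{1,\dots,k/2\}$, $s_1<s_2<s_3$ and $s_1<t_1$. Then $s_m<t_m$ for $m=1,2,3$ and $t_1<t_2<t_3$.
   Context: $\phi=\exp(2\pi\mathrm{i}/k)$, $\mathbf{k}=\{1,\dots,k-1\}$, $\mathbf{k}_0=\{0,\dots,k-1\}$. A quadruple $(i,j\mid s,t)\in\mathbf{k}^4$ with $i\ne s$ is an overlap if $\phi^\omega(\phi^j-1)(\phi^s-1)=(\phi^i-1)(\phi^t-1)$ for some $\omega\in\mathbf{k}_0$; it is trivial if one of $i\equiv\pm j$, $j\equiv\pm t$, $t\equiv\pm s$, $s\equiv\pm i\pmod k$ holds, nontrivial otherwise. $\mathcal{O}(\mathbb{C},k)$ is the set of nontrivial overlaps. A triple overlap $(s_1,t_1\mid s_2,t_2\mid s_3,t_3)$ (with $s_m,t_m\in\mathbf{k}$) means that $(s_1,t_1\mid s_2,t_2)$, $(s_2,t_2\mid s_3,t_3)$ and $(s_1,t_1\mid s_3,t_3)$ all belong to $\mathcal{O}(\mathbb{C},k)$. *)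

theory Defs
  imports "HOL-Analysis.Analysis" "HOL-Number_Theory.Cong"
begin

definition phi :: "nat \<Rightarrow> complex" where
  "phi k = exp (2 * pi * \<i> / of_nat k)"

definition kset :: "nat \<Rightarrow> nat set" where
  "kset k = {1..<k}"

definition is_overlap :: "nat \<Rightarrow> nat \<Rightarrow> nat \<Rightarrow> nat \<Rightarrow> nat \<Rightarrow> bool" where
  "is_overlap k i j s t \<longleftrightarrow>
     i \<in> kset k \<and> j \<in> kset k \<and> s \<in> kset k \<and> t \<in> kset k \<and> i \<noteq> s \<and>
     (\<exists>\<omega>\<in>{0..<k}. phi k ^ \<omega> * (phi k ^ j - 1) * (phi k ^ s - 1)
                     = (phi k ^ i - 1) * (phi k ^ t - 1))"

definition pm_cong :: "nat \<Rightarrow> nat \<Rightarrow> nat \<Rightarrow> bool" where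
  "pm_cong k a b \<longleftrightarrow> [int a = int b] (mod int k) \<or> [int a = - int b] (mod int k)"

definition trivial_overlap :: "nat \<Rightarrow> nat \<Rightarrow> nat \<Rightarrow> nat \<Rightarrow> nat \<Rightarrow> bool" where
  "trivial_overlap k i j s t \<longleftrightarrow>
     pm_cong k i j \<or> pm_cong k j t \<or> pm_cong k t s \<or> pm_cong k s i"

definition in_O :: "nat \<Rightarrow> nat \<Rightarrow> nat \<Rightarrow> nat \<Rightarrow> nat \<Rightarrow> bool" where
  "in_O k i j s t \<longleftrightarrow> is_overlap k i j s t \<and> \<not> trivial_overlap k i j s t"

definition triple_overlap :: "nat \<Rightarrow> nat \<Rightarrow> nat \<Rightarrow> nat \<Rightarrow> nat \<Rightarrow> nat \<Rightarrow> nat \<Rightarrow> bool" where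
  "triple_overlap k s1 t1 s2 t2 s3 t3 \<longleftrightarrow>
     in_O k s1 t1 s2 t2 \<and> in_O k s2 t2 s3 t3 \<and> in_O k s1 t1 s3 t3"

end

theory Submission
  imports Defs
begin

lemma phi_pow: "phi k ^ a = cis (2 * pi * real a / real k)"
proof -
  have "phi k ^ a = exp (of_nat a * (2 * pi * \<i> / of_nat k))"
    unfolding phi_def by (simp only: exp_of_nat_mult)
  also have "\<dots> = exp (\<i> * complex_of_real (2 * pi * real a / real k))"
    by (simp add: field_simps)
  finally show ?thesis by (simp add: cis_conv_exp)
qed

lemma N_sq: "(norm (phi k ^ a - 1))^2 = 2 - 2 * cos (2 * pi * real a / real k)"
proof -
  define x where "x = 2 * pi * real a / real k"
  have "(norm (cis x - 1))^2 = (cos x - 1)^2 + (sin x)^2"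
    by (simp add: cmod_power2)
  also have "\<dots> = 2 - 2 * cos x"
    using sin_cos_squared_add[of x] by (simp add: power2_eq_square algebra_simps)
  finally show ?thesis by (simp add: phi_pow x_def)
qed

lemma N_mono:
  assumes "k > 0" "a < b" "b \<le> k div 2"
  shows "norm (phi k ^ a - 1) < norm (phi k ^ b - 1)"
proof -
  have kb: "2 * real b \<le> real k" using assms by linarith
  have "cos (2 * pi * real b / real k) < cos (2 * pi * real a / real k)"
  proof (rule cos_monotone_0_pi)
    show "0 \<le> 2 * pi * real a / real k" by simp
    show "2 * pi * real a / real k < 2 * pi * real b / real k"
      using assms by (simp add: divide_strict_right_mono)
    have "2 * pi * real b / real k = pi * (2 * real b / real k)" by simp
    also have "\<dots> \<le> pi * 1"
      using kb assms by (intro mult_left_mono) (auto simp: divide_le_eq_1)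
    finally show "2 * pi * real b / real k \<le> pi" by simp
  qed
  hence "(norm (phi k ^ a - 1))^2 < (norm (phi k ^ b - 1))^2"
    by (simp add: N_sq)
  thus ?thesis by (rule power_less_imp_less_base) simp
qed

lemma N_pos:
  assumes "k > 0" "1 \<le> b" "b \<le> k div 2"
  shows "norm (phi k ^ b - 1) > 0"
proof -
  have "norm (phi k ^ 0 - 1) < norm (phi k ^ b - 1)"
    using N_mono[of k 0 b] assms by simp
  thus ?thesis by simp
qed

lemma overlap_norm:
  assumes "is_overlap k i j s t"
  shows "norm (phi k ^ j - 1) * norm (phi k ^ s - 1) = norm (phi k ^ i - 1) * norm (phi k ^ t - 1)"
proof -
  obtain w where "phi k ^ w * (phi k ^ j - 1) * (phi k ^ s - 1) = (phi k ^ i - 1) * (phi k ^ t - 1)"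
    using assms unfolding is_overlap_def by blast
  hence "norm (phi k ^ w * (phi k ^ j - 1) * (phi k ^ s - 1)) = norm ((phi k ^ i - 1) * (phi k ^ t - 1))"
    by simp
  moreover have "norm (phi k ^ w) = 1" by (simp add: phi_pow)
  ultimately show ?thesis by (simp add: norm_mult)
qed

lemma step:
  assumes "k > 0" "is_overlap k s1 t1 s2 t2"
    and "s1 \<in> {1..k div 2}" "t1 \<in> {1..k div 2}" "s2 \<in> {1..k div 2}" "t2 \<in> {1..k div 2}"
    and "s1 < s2" "s1 < t1"
  shows "s2 < t2 \<and> t1 < t2"
proof -
  define N where "N a = norm (phi k ^ a - 1)" for a
  have eq: "N t1 * N s2 = N s1 * N t2" using overlap_norm[OF assms(2)] by (simp add: N_def)
  have mono: "\<And>a b. a < b \<Longrightarrow> b \<le> k div 2 \<Longrightarrow> N a < N b" using N_mono assms(1) by (simp add: N_def)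
  have pos: "\<And>b. b \<in> {1..k div 2} \<Longrightarrow> N b > 0" using N_pos assms(1) by (simp add: N_def)
  have p1: "N s1 > 0" "N t1 > 0" "N s2 > 0" "N t2 > 0" using pos assms(3-6) by auto
  have m1: "N s1 < N s2" using mono assms by auto
  have m2: "N s1 < N t1" using mono assms by auto
  have "N s1 * N t1 < N s1 * N t2"
  proof -
    have "N s1 * N t1 < N s2 * N t1" using m1 p1 by simp
    thus ?thesis using eq by (simp add: mult.commute)
  qed
  hence A: "N t1 < N t2" using p1 by simp
  have "N s1 * N s2 < N s1 * N t2"
  proof -
    have "N s1 * N s2 < N t1 * N s2" using m2 p1 by simp
    thus ?thesis using eq by (simp add: mult.commute)
  qed
  hence B: "N s2 < N t2" using p1 by simp
  have "t1 < t2"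
  proof (rule ccontr)
    assume "\<not> t1 < t2"
    hence "t2 = t1 \<or> t2 < t1" by auto
    thus False using A mono[of t2 t1] assms(4) by auto
  qed
  moreover have "s2 < t2"
  proof (rule ccontr)
    assume "\<not> s2 < t2"
    hence "t2 = s2 \<or> t2 < s2" by auto
    thus False using B mono[of t2 s2] assms(5) by auto
  qed
  ultimately show ?thesis by simp
qed

theorem lemma35:
  fixes k s1 t1 s2 t2 s3 t3 :: nat
  assumes "k \<ge> 4" and "even k"
    and "triple_overlap k s1 t1 s2 t2 s3 t3"
    and "s1 \<in> {1..k div 2}" "t1 \<in> {1..k div 2}"
    and "s2 \<in> {1..k div 2}" "t2 \<in> {1..k div 2}"
    and "s3 \<in> {1..k div 2}" "t3 \<in> {1..k div 2}"
    and "s1 < s2" "s2 < s3" "s1 < t1"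
  shows "s1 < t1 \<and> s2 < t2 \<and> s3 < t3 \<and> t1 < t2 \<and> t2 < t3"
proof -
  have k: "k > 0" using assms(1) by simp
  have o1: "is_overlap k s1 t1 s2 t2" and o2: "is_overlap k s2 t2 s3 t3"
    using assms(3) unfolding triple_overlap_def in_O_def by auto
  have r1: "s2 < t2 \<and> t1 < t2" using step[OF k o1] assms by auto
  have r2: "s3 < t3 \<and> t2 < t3" using step[OF k o2] assms r1 by auto
  show ?thesis using r1 r2 assms by auto
qed

end
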